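(* Let $\mathcal{X},\mathcal{Y}$ be mm-spaces and $p\in[1,\infty)$. Then $$d_{\mathrm{GM},p}(\mathcal{X},\mathcal{Y})\geq\inf_{\phi\in\mathcal{T}(\mu_X,\mu_Y)}\int_X\left(\int_0^1\big|h^{-1}_{\mathcal{X}}(x,u)-h^{-1}_{\mathcal{Y}}(\phi(x),u)\big|^p\,du\right)^{1/p}\mu_X(dx).$$ In particular, for $p=1$, $$d_{\mathrm{GM},1}(\mathcal{X},\mathcal{Y})\geq\inf_{\phi\in\mathcal{T}(\mu_X,\mu_Y)}\int_X c_{\mathcal{X},\mathcal{Y}}(x,\phi(x))\,\mu_X(dx).$$
   Context: A metric measure space (mm-space) is a triple $(X,d_X,\mu_X)$ with $(X,d_X)$ compact metric and $\mu_X$ a Borel probability measure of full support. $\mathcal{T}(\mu_X,\mu_Y)$ is the set of measurable $\phi:X\to Y$ with $\phi_\#\mu_X=\mu_Y$, and $$d_{\mathrm{GM},p}(\mathcal{X},\mathcal{Y})=\inf_{\phi\in\mathcal{T}(\mu_X,\mu_Y)}\left(\iint_{X\times X}|d_X(x,x')-d_Y(\phi(x),\phi(x'))|^p\,\mu_X(dx)\mu_X(dx')\right)^{1/p}$$ ($=\infty$ if $\mathcal{T}(\mu_X,\mu_Y)=\emptyset$). The local distance distribution is $h_{\mathcal{X}}(x,t)=\mu_X(\overline{B_t(x)})$ for $x\in X$, $t\geq0$, where $\overline{B_t(x)}=\{x'\in X: d_X(x,x')\le t\}$; its generalized inverse is $h^{-1}_{\mathcal{X}}(x,u)=\inf\{r\geq0: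 h_{\mathcal{X}}(x,r)>u\}$ for $u\in[0,1]$. The cost function is $c_{\mathcal{X},\mathcal{Y}}(x,y)=\int_0^\infty|h_{\mathcal{X}}(x,t)-h_{\mathcal{Y}}(y,t)|\,dt$. *)

theory Defs
  imports "HOL-Probability.Probability"
begin

definition mm_space :: "'a::metric_space measure \<Rightarrow> bool" where
  "mm_space M \<longleftrightarrow> prob_space M \<and> compact (space M) \<and>
     sets M = sets (restrict_space borel (space M)) \<and>
     (\<forall>x\<in>space M. \<forall>e>0. 0 < measure M (ball x e \<inter> space M))"

definition transport_maps :: "'a measure \<Rightarrow> 'b measure \<Rightarrow> ('a \<Rightarrow> 'b) set" where
  "transport_maps M N = {\<phi>. \<phi> \<in> M \<rightarrow>\<^sub>M N \<and> distr M N \<phi> = N}"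

text \<open>Gromov-Monge distance; the infimum over the empty set is +infinity.\<close>
definition dGM :: "real \<Rightarrow> 'a::metric_space measure \<Rightarrow> 'b::metric_space measure \<Rightarrow> ereal" where
  "dGM p M N = (INF \<phi>\<in>transport_maps M N.
     ereal ((integral\<^sup>L (M \<Otimes>\<^sub>M M)
        (\<lambda>(x, x'). \<bar>dist x x' - dist (\<phi> x) (\<phi> x')\<bar> powr p)) powr (1 / p)))"

definition ldd :: "'a::metric_space measure \<Rightarrow> 'a \<Rightarrow> real \<Rightarrow> real" where
  "ldd M x t = measure M (cball x t \<inter> space M)"

definition ldd_inv :: "'a::metric_space measure \<Rightarrow> 'a \<Rightarrow> real \<Rightarrow> real" where
  "ldd_inv M x u = Inf {r. 0 \<le> r \<and> ldd M x r > u}"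

definition cost :: "'a::metric_space measure \<Rightarrow> 'b::metric_space measure \<Rightarrow> 'a \<Rightarrow> 'b \<Rightarrow> real" where
  "cost M N x y = (\<integral>t\<in>{0..}. \<bar>ldd M x t - ldd N y t\<bar> \<partial>lborel)"

end

theory Submission
  imports Defs
begin


lemma nn_FTC_open:
  fixes f Fn :: "real \<Rightarrow> real"
  assumes ab: "a \<le> b" and fm[measurable]: "f \<in> borel_measurable borel"
    and D: "\<And>x. a < x \<Longrightarrow> x < b \<Longrightarrow> DERIV Fn x :> f x"
    and nn: "\<And>x. a < x \<Longrightarrow> x < b \<Longrightarrow> 0 \<le> f x"
    and cont: "continuous_on {a..b} Fn"
  shows "(\<integral>\<^sup>+x. ennreal (f x) * indicator {a<..<b} x \<partial>lborel) = ennreal (Fn b - Fn a)"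
proof (cases "a = b")
  case True then show ?thesis by simp
next
  case False
  with ab have ab': "a < b" by simp
  define d where "d n = (b - a) / (3 + real n)" for n :: nat
  define c where "c n = a + d n" for n
  define e where "e n = b - d n" for n
  have dpos: "0 < d n" for n using ab' by (simp add: d_def)
  have dle: "d n < (b - a) / 2" for n using ab' unfolding d_def
    by (intro divide_strict_left_mono) auto
  have ddec: "d (Suc n) \<le> d n" for n using ab' unfolding d_def
    by (simp add: frac_le)
  have ce: "a < c n" "c n < e n" "e n < b" for n using dpos[of n] dle[of n] by (auto simp: c_def e_def)
  define g where "g n x = ennreal (f x) * indicator {c n..e n} x" for n x
  have inc: "incseq g"
  proof (rule incseq_SucI, rule le_funI)
    fix n x
    have "{c n..e n} \<subseteq> {c (Suc n)..e (Suc n)}" using ddec[of n] by (auto simp: c_def e_def)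
    then show "g n x \<le> g (Suc n) x" unfolding g_def
      by (auto split: split_indicator)
  qed
  have d0: "d \<longlonglongrightarrow> 0" unfolding d_def
    by (intro tendsto_divide_0[OF tendsto_const] filterlim_at_top_imp_at_infinity filterlim_tendsto_add_at_top[OF tendsto_const] filterlim_real_sequentially)
  have incx: "incseq (\<lambda>n. g n x)" for x using inc by (auto simp: incseq_def le_fun_def)
  have sup: "(SUP n. g n x) = ennreal (f x) * indicator {a<..<b} x" for x
  proof (rule LIMSEQ_unique[OF LIMSEQ_SUP[OF incx]])
    show "(\<lambda>n. g n x) \<longlonglongrightarrow> ennreal (f x) * indicator {a<..<b} x"
    proof (cases "a < x \<and> x < b")
      case True
      then have "0 < min (x - a) (b - x)" by simp
      from order_tendstoD(2)[OF d0 this] have "eventually (\<lambda>n. d n < min (x - a) (b - x)) sequentially" .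
      then have "eventually (\<lambda>n. g n x = ennreal (f x) * indicator {a<..<b} x) sequentially"
        by eventually_elim (use True in \<open>auto simp: g_def c_def e_def split: split_indicator\<close>)
      then show ?thesis by (rule tendsto_eventually)
    next
      case False
      then have "g n x = 0" for n using ce[of n] by (auto simp: g_def split: split_indicator)
      then show ?thesis using False by (auto split: split_indicator)
    qed
  qed
  have "(\<integral>\<^sup>+x. ennreal (f x) * indicator {a<..<b} x \<partial>lborel) = (\<integral>\<^sup>+x. (SUP n. g n x) \<partial>lborel)"
    by (simp add: sup)
  also have "\<dots> = (SUP n. integral\<^sup>N lborel (g n))"
    by (rule nn_integral_monotone_convergence_SUP[OF inc]) (unfold g_def, measurable)
  also have "\<dots> = ennreal (Fn b - Fn a)"
  proof (rule LIMSEQ_unique[OF LIMSEQ_SUP])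
    show "incseq (\<lambda>n. integral\<^sup>N lborel (g n))"
      using inc by (auto simp: incseq_def le_fun_def intro!: nn_integral_mono)
    have eq: "integral\<^sup>N lborel (g n) = ennreal (Fn (e n) - Fn (c n))" for n
      unfolding g_def
      by (rule nn_integral_FTC_Icc) (use ce[of n] D nn in \<open>auto intro!: order_less_le_trans[OF _ _] \<close>)
    have ct: "(\<lambda>n. c n) \<longlonglongrightarrow> a" unfolding c_def using tendsto_add[OF tendsto_const d0] by simp
    have et: "(\<lambda>n. e n) \<longlonglongrightarrow> b" unfolding e_def using tendsto_diff[OF tendsto_const d0] by simp
    have cb: "\<forall>n. c n \<in> {a..b}" "\<forall>n. e n \<in> {a..b}" using ce by (meson atLeastAtMost_iff less_imp_le less_trans)+
    have "(\<lambda>n. Fn (c n)) \<longlonglongrightarrow> Fn a"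
      using continuous_on_tendsto_compose[OF cont ct] cb(1) ab by (auto simp: o_def always_eventually)
    moreover have "(\<lambda>n. Fn (e n)) \<longlonglongrightarrow> Fn b"
      using continuous_on_tendsto_compose[OF cont et] cb(2) ab by (auto simp: o_def always_eventually)
    ultimately have "(\<lambda>n. ennreal (Fn (e n) - Fn (c n))) \<longlonglongrightarrow> ennreal (Fn b - Fn a)"
      by (intro tendsto_ennrealI tendsto_diff)
    then show "(\<lambda>n. integral\<^sup>N lborel (g n)) \<longlonglongrightarrow> ennreal (Fn b - Fn a)"
      by (simp add: eq)
  qed
  finally show ?thesis .
qed


lemma rep1:
  "ennreal (max 0 (x - y)) = (\<integral>\<^sup>+t. 1 * indicator {t. y \<le> t \<and> t < x} t \<partial>lborel)"
proof -
  have "{t. y \<le> t \<and> t < x} = {y..<x}" by auto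
  then show ?thesis by (cases "y \<le> x") (auto simp: max_def)
qed

definition kerp :: "real \<Rightarrow> real \<times> real \<Rightarrow> ennreal" where
  "kerp p z = ennreal (if fst z < snd z then p * (p - 1) * (snd z - fst z) powr (p - 2) else 0)"

lemma kerp_meas[measurable]: "kerp p \<in> borel_measurable (lborel \<Otimes>\<^sub>M lborel)"
  unfolding kerp_def by measurable

lemma inner_r:
  fixes p y t :: real
  assumes p: "1 < p" and yt: "y < t"
  shows "(\<integral>\<^sup>+r. ennreal (p * (p - 1) * (t - r) powr (p - 2)) * indicator {y<..<t} r \<partial>lborel)
     = ennreal (p * (t - y) powr (p - 1))"
proof -
  have "(\<integral>\<^sup>+r. ennreal (p * (p - 1) * (t - r) powr (p - 2)) * indicator {y<..<t} r \<partial>lborel)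
     = ennreal ((- p * (t - t) powr (p - 1)) - (- p * (t - y) powr (p - 1)))"
  proof (rule nn_FTC_open)
    show "y \<le> t" using yt by simp
    show "(\<lambda>r. p * (p - 1) * (t - r) powr (p - 2)) \<in> borel_measurable borel" by measurable
    fix r assume r: "y < r" "r < t"
    show "0 \<le> p * (p - 1) * (t - r) powr (p - 2)" using p by simp
    have tr: "0 < t - r" using r by simp
    show "((\<lambda>r. - p * (t - r) powr (p - 1)) has_real_derivative p * (p - 1) * (t - r) powr (p - 2)) (at r)"
      by (rule derivative_eq_intros refl | use tr in simp)+
  next
    show "continuous_on {y..t} (\<lambda>r. - p * (t - r) powr (p - 1))"
      using p by (intro continuous_intros continuous_on_powr') (auto intro!: continuous_intros)
  qed
  then show ?thesis using p by simp
qed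


lemma outer_t:
  fixes p y x :: real
  assumes p: "1 < p" and yx: "y < x"
  shows "(\<integral>\<^sup>+t. ennreal (p * (t - y) powr (p - 1)) * indicator {y<..<x} t \<partial>lborel)
     = ennreal ((x - y) powr p)"
proof -
  have "(\<integral>\<^sup>+t. ennreal (p * (t - y) powr (p - 1)) * indicator {y<..<x} t \<partial>lborel)
     = ennreal ((x - y) powr p - (y - y) powr p)"
  proof (rule nn_FTC_open)
    show "y \<le> x" using yx by simp
    show "(\<lambda>t. p * (t - y) powr (p - 1)) \<in> borel_measurable borel" by measurable
    fix t assume r: "y < t" "t < x"
    show "0 \<le> p * (t - y) powr (p - 1)" using p by simp
    have tr: "0 < t - y" using r by simp
    show "((\<lambda>t. (t - y) powr p) has_real_derivative p * (t - y) powr (p - 1)) (at t)"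
      by (rule derivative_eq_intros refl | use tr in simp)+
  next
    show "continuous_on {y..x} (\<lambda>t. (t - y) powr p)"
      using p by (intro continuous_on_powr') (auto intro!: continuous_intros)
  qed
  then show ?thesis using p by simp
qed

lemma repP:
  fixes p x y :: real
  assumes p: "1 < p"
  shows "ennreal (max 0 (x - y) powr p) =
    (\<integral>\<^sup>+z. kerp p z * indicator {z. y \<le> fst z \<and> snd z < x} z \<partial>(lborel \<Otimes>\<^sub>M lborel))"
proof -
  have m: "(\<lambda>z. kerp p z * indicator {z. y \<le> fst z \<and> snd z < x} z) \<in> borel_measurable (lborel \<Otimes>\<^sub>M lborel)"
    by measurable
  have inner: "(\<integral>\<^sup>+r. kerp p (r, t) * indicator {z. y \<le> fst z \<and> snd z < x} (r, t) \<partial>lborel)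
      = ennreal (p * (t - y) powr (p - 1)) * indicator {y<..<x} t" for t
  proof (cases "y < t \<and> t < x")
    case True
    have "(\<integral>\<^sup>+r. kerp p (r, t) * indicator {z. y \<le> fst z \<and> snd z < x} (r, t) \<partial>lborel)
       = (\<integral>\<^sup>+r. ennreal (p * (p - 1) * (t - r) powr (p - 2)) * indicator {y<..<t} r \<partial>lborel)"
      by (rule nn_integral_cong_AE, use AE_lborel_singleton[of y] in eventually_elim)
         (use True in \<open>auto simp: kerp_def split: split_indicator\<close>)
    also have "\<dots> = ennreal (p * (t - y) powr (p - 1))" using inner_r[OF p] True by simp
    finally show ?thesis using True by simp
  next
    case False
    then have z0: "kerp p (r, t) * indicator {z. y \<le> fst z \<and> snd z < x} (r, t) = 0" for r
      by (auto simp: kerp_def split: split_indicator)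
    have "(\<integral>\<^sup>+r. kerp p (r, t) * indicator {z. y \<le> fst z \<and> snd z < x} (r, t) \<partial>lborel) = 0"
      by (simp only: z0) simp
    then show ?thesis using False by (auto split: split_indicator)
  qed
  have "(\<integral>\<^sup>+z. kerp p z * indicator {z. y \<le> fst z \<and> snd z < x} z \<partial>(lborel \<Otimes>\<^sub>M lborel))
      = (\<integral>\<^sup>+t. (\<integral>\<^sup>+r. kerp p (r, t) * indicator {z. y \<le> fst z \<and> snd z < x} (r, t) \<partial>lborel) \<partial>lborel)"
    by (rule lborel_pair.nn_integral_snd[symmetric, OF m])
  also have "\<dots> = (\<integral>\<^sup>+t. ennreal (p * (t - y) powr (p - 1)) * indicator {y<..<x} t \<partial>lborel)"
    by (simp add: inner)
  also have "\<dots> = ennreal (max 0 (x - y) powr p)"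
  proof (cases "y < x")
    case True then show ?thesis using outer_t[OF p True] by simp
  next
    case False then show ?thesis using p by simp
  qed
  finally show ?thesis by simp
qed




lemma coupling_side:
  fixes X Y :: "'w \<Rightarrow> real" and \<Phi> :: "'z \<Rightarrow> ennreal"
  assumes P: "prob_space P" and [measurable]: "X \<in> borel_measurable P" "Y \<in> borel_measurable P"
    and L: "sigma_finite_measure L"
    and [measurable]: "\<Phi> \<in> borel_measurable L" "\<rho> \<in> borel_measurable L" "\<tau> \<in> borel_measurable L"
  shows "(\<integral>\<^sup>+z. \<Phi> z * ennreal (measure P {\<omega>\<in>space P. Y \<omega> \<le> \<rho> z} - measure P {\<omega>\<in>space P. X \<omega> \<le> \<tau> z}) \<partial>L)
     \<le> (\<integral>\<^sup>+\<omega>. (\<integral>\<^sup>+z. \<Phi> z * indicator {z. Y \<omega> \<le> \<rho> z \<and> \<tau> z < X \<omega>} z \<partial>L) \<partial>P)"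
proof -
  interpret P: prob_space P by fact
  interpret L: sigma_finite_measure L by fact
  interpret PL: pair_sigma_finite P L ..
  have m: "(\<lambda>(\<omega>, z). \<Phi> z * indicator {z. Y \<omega> \<le> \<rho> z \<and> \<tau> z < X \<omega>} z) \<in> borel_measurable (P \<Otimes>\<^sub>M L)"
    by measurable
  have "(\<integral>\<^sup>+\<omega>. (\<integral>\<^sup>+z. \<Phi> z * indicator {z. Y \<omega> \<le> \<rho> z \<and> \<tau> z < X \<omega>} z \<partial>L) \<partial>P)
      = (\<integral>\<^sup>+z. (\<integral>\<^sup>+\<omega>. \<Phi> z * indicator {z. Y \<omega> \<le> \<rho> z \<and> \<tau> z < X \<omega>} z \<partial>P) \<partial>L)"
    using PL.Fubini'[OF m] by simp
  also have "\<dots> \<ge> (\<integral>\<^sup>+z. \<Phi> z * ennreal (measure P {\<omega>\<in>space P. Y \<omega> \<le> \<rho> z} - measure P {\<omega>\<in>space P. X \<omega> \<le> \<tau> z}) \<partial>L)"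
  proof (rule nn_integral_mono)
    fix z assume z: "z \<in> space L"
    define A where "A = {\<omega>\<in>space P. Y \<omega> \<le> \<rho> z \<and> \<tau> z < X \<omega>}"
    define B where "B = {\<omega>\<in>space P. Y \<omega> \<le> \<rho> z}"
    define C where "C = {\<omega>\<in>space P. X \<omega> \<le> \<tau> z}"
    have [measurable]: "A \<in> sets P" "B \<in> sets P" "C \<in> sets P" unfolding A_def B_def C_def by measurable
    have "(\<integral>\<^sup>+\<omega>. \<Phi> z * indicator {z. Y \<omega> \<le> \<rho> z \<and> \<tau> z < X \<omega>} z \<partial>P) = (\<integral>\<^sup>+\<omega>. \<Phi> z * indicator A \<omega> \<partial>P)"
      by (rule nn_integral_cong) (auto simp: A_def split: split_indicator)
    also have "\<dots> = \<Phi> z * emeasure P A" by (rule nn_integral_cmult_indicator) simp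
    also have "\<dots> = \<Phi> z * ennreal (measure P A)" by (simp add: P.emeasure_eq_measure)
    finally have eq: "(\<integral>\<^sup>+\<omega>. \<Phi> z * indicator {z. Y \<omega> \<le> \<rho> z \<and> \<tau> z < X \<omega>} z \<partial>P) = \<Phi> z * ennreal (measure P A)" .
    have "B \<subseteq> A \<union> C" unfolding A_def B_def C_def by auto
    then have "measure P B \<le> measure P (A \<union> C)" by (intro P.finite_measure_mono) auto
    also have "\<dots> \<le> measure P A + measure P C" by (intro measure_subadditive) (auto simp: P.emeasure_eq_measure)
    finally have "measure P B - measure P C \<le> measure P A" by simp
    then show "\<Phi> z * ennreal (measure P {\<omega>\<in>space P. Y \<omega> \<le> \<rho> z} - measure P {\<omega>\<in>space P. X \<omega> \<le> \<tau> z})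
        \<le> (\<integral>\<^sup>+\<omega>. \<Phi> z * indicator {z. Y \<omega> \<le> \<rho> z \<and> \<tau> z < X \<omega>} z \<partial>P)"
      unfolding eq B_def[symmetric] C_def[symmetric] by (intro mult_left_mono ennreal_leI) auto
  qed
  finally show ?thesis .
qed

lemma quantile_side:
  fixes Q1 Q2 F G :: "real \<Rightarrow> real" and \<Phi> :: "'z \<Rightarrow> ennreal"
  assumes [measurable]: "Q1 \<in> borel_measurable borel" "Q2 \<in> borel_measurable borel"
    and L: "sigma_finite_measure L"
    and [measurable]: "\<Phi> \<in> borel_measurable L" "\<rho> \<in> borel_measurable L" "\<tau> \<in> borel_measurable L"
    and q2: "\<And>u r. 0 \<le> u \<Longrightarrow> u < 1 \<Longrightarrow> Q2 u \<le> r \<Longrightarrow> u \<le> G r"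
    and q1: "\<And>u t. 0 \<le> u \<Longrightarrow> u < 1 \<Longrightarrow> t < Q1 u \<Longrightarrow> F t \<le> u"
  shows "(\<integral>\<^sup>+u. (\<integral>\<^sup>+z. \<Phi> z * indicator {z. u \<in> {0..1} \<and> Q2 u \<le> \<rho> z \<and> \<tau> z < Q1 u} z \<partial>L) \<partial>lborel)
     \<le> (\<integral>\<^sup>+z. \<Phi> z * ennreal (G (\<rho> z) - F (\<tau> z)) \<partial>L)"
proof -
  interpret L: sigma_finite_measure L by fact
  interpret PL: pair_sigma_finite lborel L ..
  have m: "(\<lambda>(u, z). \<Phi> z * indicator {z. u \<in> {0..1} \<and> Q2 u \<le> \<rho> z \<and> \<tau> z < Q1 u} z) \<in> borel_measurable (lborel \<Otimes>\<^sub>M L)"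
    by measurable
  have "(\<integral>\<^sup>+u. (\<integral>\<^sup>+z. \<Phi> z * indicator {z. u \<in> {0..1} \<and> Q2 u \<le> \<rho> z \<and> \<tau> z < Q1 u} z \<partial>L) \<partial>lborel)
      = (\<integral>\<^sup>+z. (\<integral>\<^sup>+u. \<Phi> z * indicator {z. u \<in> {0..1} \<and> Q2 u \<le> \<rho> z \<and> \<tau> z < Q1 u} z \<partial>lborel) \<partial>L)"
    using PL.Fubini'[OF m] by simp
  also have "\<dots> \<le> (\<integral>\<^sup>+z. \<Phi> z * ennreal (G (\<rho> z) - F (\<tau> z)) \<partial>L)"
  proof (rule nn_integral_mono)
    fix z assume z: "z \<in> space L"
    define A where "A = {u. u \<in> {0..1} \<and> Q2 u \<le> \<rho> z \<and> \<tau> z < Q1 u}"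
    have "{u \<in> space borel. u \<in> {0..1} \<and> Q2 u \<le> \<rho> z \<and> \<tau> z < Q1 u} \<in> sets borel" by measurable
    then have Ameas[measurable]: "A \<in> sets lborel" unfolding A_def by simp
    have "(\<integral>\<^sup>+u. \<Phi> z * indicator {z. u \<in> {0..1} \<and> Q2 u \<le> \<rho> z \<and> \<tau> z < Q1 u} z \<partial>lborel) = (\<integral>\<^sup>+u. \<Phi> z * indicator A u \<partial>lborel)"
      by (rule nn_integral_cong) (auto simp: A_def split: split_indicator)
    also have "\<dots> = \<Phi> z * emeasure lborel A" by (rule nn_integral_cmult_indicator[OF Ameas])
    also have "\<dots> \<le> \<Phi> z * ennreal (G (\<rho> z) - F (\<tau> z))"
    proof (rule mult_left_mono)
      have "A \<subseteq> {F (\<tau> z) .. G (\<rho> z)} \<union> {1}"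
      proof
        fix u assume u: "u \<in> A"
        show "u \<in> {F (\<tau> z) .. G (\<rho> z)} \<union> {1}"
        proof (cases "u = 1")
          case False
          with u have "0 \<le> u" "u < 1" by (auto simp: A_def)
          with u q1 q2 show ?thesis by (auto simp: A_def)
        qed simp
      qed
      then have "emeasure lborel A \<le> emeasure lborel ({F (\<tau> z) .. G (\<rho> z)} \<union> {1})"
        by (intro emeasure_mono) auto
      also have "\<dots> \<le> emeasure lborel {F (\<tau> z) .. G (\<rho> z)} + emeasure lborel {1::real}"
        by (intro emeasure_subadditive) auto
      also have "\<dots> = ennreal (G (\<rho> z) - F (\<tau> z))"
        by (simp add: emeasure_lborel_Icc_eq ennreal_neg)
      finally show "emeasure lborel A \<le> ennreal (G (\<rho> z) - F (\<tau> z))" .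
    qed simp
    finally show "(\<integral>\<^sup>+u. \<Phi> z * indicator {z. u \<in> {0..1} \<and> Q2 u \<le> \<rho> z \<and> \<tau> z < Q1 u} z \<partial>lborel)
        \<le> \<Phi> z * ennreal (G (\<rho> z) - F (\<tau> z))" .
  qed
  finally show ?thesis .
qed




lemma sf_pair: "sigma_finite_measure (lborel \<Otimes>\<^sub>M (lborel :: real measure))"
proof -
  interpret pair_sigma_finite "lborel :: real measure" "lborel :: real measure" ..
  show ?thesis by intro_locales
qed

lemma quantile_vs_coupling0:
  fixes X Y :: "'w \<Rightarrow> real" and \<Phi> :: "'z \<Rightarrow> ennreal" and Q1 Q2 :: "real \<Rightarrow> real"
  assumes P: "prob_space P" and [measurable]: "X \<in> borel_measurable P" "Y \<in> borel_measurable P"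
    and L: "sigma_finite_measure L"
    and [measurable]: "\<Phi> \<in> borel_measurable L" "\<rho> \<in> borel_measurable L" "\<tau> \<in> borel_measurable L"
    and rep: "\<And>x y. ennreal (max 0 (x - y) powr p) = (\<integral>\<^sup>+z. \<Phi> z * indicator {z. y \<le> \<rho> z \<and> \<tau> z < x} z \<partial>L)"
    and [measurable]: "Q1 \<in> borel_measurable borel" "Q2 \<in> borel_measurable borel"
    and F: "\<And>t. F t = measure P {\<omega>\<in>space P. X \<omega> \<le> t}"
    and G: "\<And>t. G t = measure P {\<omega>\<in>space P. Y \<omega> \<le> t}"
    and q1a: "\<And>u r. 0 \<le> u \<Longrightarrow> u < 1 \<Longrightarrow> Q1 u \<le> r \<Longrightarrow> u \<le> F r"
    and q1b: "\<And>u t. 0 \<le> u \<Longrightarrow> u < 1 \<Longrightarrow> t < Q1 u \<Longrightarrow> F t \<le> u"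
    and q2a: "\<And>u r. 0 \<le> u \<Longrightarrow> u < 1 \<Longrightarrow> Q2 u \<le> r \<Longrightarrow> u \<le> G r"
    and q2b: "\<And>u t. 0 \<le> u \<Longrightarrow> u < 1 \<Longrightarrow> t < Q2 u \<Longrightarrow> G t \<le> u"
  shows "(\<integral>\<^sup>+u. ennreal (\<bar>Q1 u - Q2 u\<bar> powr p) * indicator {0..1} u \<partial>lborel)
      \<le> (\<integral>\<^sup>+\<omega>. ennreal (\<bar>X \<omega> - Y \<omega>\<bar> powr p) \<partial>P)"
proof -
  have split: "ennreal (\<bar>a - b\<bar> powr p) = ennreal (max 0 (a - b) powr p) + ennreal (max 0 (b - a) powr p)" for a b :: real
    by (cases "a \<le> b") (auto simp: max_def)
  have K1: "ennreal (max 0 (Q1 u - Q2 u) powr p) * indicator {0..1} u =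
      (\<integral>\<^sup>+z. \<Phi> z * indicator {z. u \<in> {0..1} \<and> Q2 u \<le> \<rho> z \<and> \<tau> z < Q1 u} z \<partial>L)" for u
    by (cases "u \<in> {0..1}") (auto simp: rep)
  have K2: "ennreal (max 0 (Q2 u - Q1 u) powr p) * indicator {0..1} u =
      (\<integral>\<^sup>+z. \<Phi> z * indicator {z. u \<in> {0..1} \<and> Q1 u \<le> \<rho> z \<and> \<tau> z < Q2 u} z \<partial>L)" for u
    by (cases "u \<in> {0..1}") (auto simp: rep)
  have "(\<integral>\<^sup>+u. ennreal (\<bar>Q1 u - Q2 u\<bar> powr p) * indicator {0..1} u \<partial>lborel)
     = (\<integral>\<^sup>+u. ennreal (max 0 (Q1 u - Q2 u) powr p) * indicator {0..1} u + ennreal (max 0 (Q2 u - Q1 u) powr p) * indicator {0..1} u \<partial>lborel)"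
    by (simp add: split distrib_right)
  also have "\<dots> = (\<integral>\<^sup>+u. ennreal (max 0 (Q1 u - Q2 u) powr p) * indicator {0..1} u \<partial>lborel)
      + (\<integral>\<^sup>+u. ennreal (max 0 (Q2 u - Q1 u) powr p) * indicator {0..1} u \<partial>lborel)"
    by (rule nn_integral_add) measurable
  also have "\<dots> \<le> (\<integral>\<^sup>+z. \<Phi> z * ennreal (G (\<rho> z) - F (\<tau> z)) \<partial>L) + (\<integral>\<^sup>+z. \<Phi> z * ennreal (F (\<rho> z) - G (\<tau> z)) \<partial>L)"
    unfolding K1 K2
    by (intro add_mono quantile_side[OF _ _ L] q1a q1b q2a q2b) measurable
  also have "\<dots> \<le> (\<integral>\<^sup>+\<omega>. (\<integral>\<^sup>+z. \<Phi> z * indicator {z. Y \<omega> \<le> \<rho> z \<and> \<tau> z < X \<omega>} z \<partial>L) \<partial>P)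
      + (\<integral>\<^sup>+\<omega>. (\<integral>\<^sup>+z. \<Phi> z * indicator {z. X \<omega> \<le> \<rho> z \<and> \<tau> z < Y \<omega>} z \<partial>L) \<partial>P)"
    unfolding F G by (intro add_mono coupling_side[OF P _ _ L]) measurable
  also have "\<dots> = (\<integral>\<^sup>+\<omega>. ennreal (max 0 (X \<omega> - Y \<omega>) powr p) \<partial>P) + (\<integral>\<^sup>+\<omega>. ennreal (max 0 (Y \<omega> - X \<omega>) powr p) \<partial>P)"
    by (simp add: rep)
  also have "\<dots> = (\<integral>\<^sup>+\<omega>. ennreal (max 0 (X \<omega> - Y \<omega>) powr p) + ennreal (max 0 (Y \<omega> - X \<omega>) powr p) \<partial>P)"
    by (rule nn_integral_add[symmetric]) measurable
  also have "\<dots> = (\<integral>\<^sup>+\<omega>. ennreal (\<bar>X \<omega> - Y \<omega>\<bar> powr p) \<partial>P)"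
    by (simp add: split)
  finally show ?thesis .
qed




lemma quantile_vs_coupling:
  fixes X Y :: "'w \<Rightarrow> real" and Q1 Q2 :: "real \<Rightarrow> real" and p :: real
  assumes p: "1 \<le> p"
    and P: "prob_space P" and [measurable]: "X \<in> borel_measurable P" "Y \<in> borel_measurable P"
    and [measurable]: "Q1 \<in> borel_measurable borel" "Q2 \<in> borel_measurable borel"
    and F: "\<And>t. F t = measure P {\<omega>\<in>space P. X \<omega> \<le> t}"
    and G: "\<And>t. G t = measure P {\<omega>\<in>space P. Y \<omega> \<le> t}"
    and q1a: "\<And>u r. 0 \<le> u \<Longrightarrow> u < 1 \<Longrightarrow> Q1 u \<le> r \<Longrightarrow> u \<le> F r"
    and q1b: "\<And>u t. 0 \<le> u \<Longrightarrow> u < 1 \<Longrightarrow> t < Q1 u \<Longrightarrow> F t \<le> u"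
    and q2a: "\<And>u r. 0 \<le> u \<Longrightarrow> u < 1 \<Longrightarrow> Q2 u \<le> r \<Longrightarrow> u \<le> G r"
    and q2b: "\<And>u t. 0 \<le> u \<Longrightarrow> u < 1 \<Longrightarrow> t < Q2 u \<Longrightarrow> G t \<le> u"
  shows "(\<integral>\<^sup>+u. ennreal (\<bar>Q1 u - Q2 u\<bar> powr p) * indicator {0..1} u \<partial>lborel)
      \<le> (\<integral>\<^sup>+\<omega>. ennreal (\<bar>X \<omega> - Y \<omega>\<bar> powr p) \<partial>P)"
proof (cases "p = 1")
  case True
  have rep: "ennreal (max 0 (x - y) powr p) = (\<integral>\<^sup>+t. (\<lambda>_. 1) t * indicator {t. y \<le> (\<lambda>t. t) t \<and> (\<lambda>t. t) t < x} t \<partial>lborel)" for x y :: real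
    using rep1[of x y] True by simp
  show ?thesis
    by (rule quantile_vs_coupling0[OF P _ _ lborel.sigma_finite_measure_axioms _ _ _ rep _ _ F G q1a q1b q2a q2b])
       simp_all
next
  case False
  with p have p1: "1 < p" by simp
  show ?thesis
    by (rule quantile_vs_coupling0[OF P _ _ sf_pair _ _ _ repP[OF p1] _ _ F G q1a q1b q2a q2b])
       simp_all
qed



lemma cdf_mono:
  fixes X :: "'w \<Rightarrow> real"
  assumes "prob_space P" "X \<in> borel_measurable P"
  shows "mono (\<lambda>t. measure P {\<omega>\<in>space P. X \<omega> \<le> t})"
proof (rule monoI)
  interpret prob_space P by fact
  fix s t :: real assume st: "s \<le> t"
  have "{\<omega>\<in>space P. X \<omega> \<le> t} \<in> sets P" using assms(2) by measurable
  then show "measure P {\<omega>\<in>space P. X \<omega> \<le> s} \<le> measure P {\<omega>\<in>space P. X \<omega> \<le> t}"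
    using st by (intro finite_measure_mono) auto
qed


lemma cost_vs_coupling:
  fixes X Y :: "'w \<Rightarrow> real"
  assumes P: "prob_space P" and [measurable]: "X \<in> borel_measurable P" "Y \<in> borel_measurable P"
    and F: "\<And>t. F t = measure P {\<omega>\<in>space P. X \<omega> \<le> t}"
    and G: "\<And>t. G t = measure P {\<omega>\<in>space P. Y \<omega> \<le> t}"
  shows "(\<integral>\<^sup>+t. ennreal \<bar>F t - G t\<bar> * indicator {0..} t \<partial>lborel)
      \<le> (\<integral>\<^sup>+\<omega>. ennreal \<bar>X \<omega> - Y \<omega>\<bar> \<partial>P)"
proof -
  have Fe: "F = (\<lambda>t. measure P {\<omega>\<in>space P. X \<omega> \<le> t})" using F by (simp add: fun_eq_iff)
  have Ge: "G = (\<lambda>t. measure P {\<omega>\<in>space P. Y \<omega> \<le> t})" using G by (simp add: fun_eq_iff)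
  have Fm[measurable]: "F \<in> borel_measurable borel"
    unfolding Fe by (rule borel_measurable_mono[OF cdf_mono[OF P]]) simp
  have Gm[measurable]: "G \<in> borel_measurable borel"
    unfolding Ge by (rule borel_measurable_mono[OF cdf_mono[OF P]]) simp
  have split: "ennreal \<bar>a - b\<bar> = ennreal (max 0 (a - b)) + ennreal (max 0 (b - a))" for a b :: real
    by (cases "a \<le> b") (auto simp: max_def)
  have split2: "ennreal \<bar>a - b\<bar> = 1 * ennreal (b - a) + 1 * ennreal (a - b)" for a b :: real
    by (cases "a \<le> b") (auto simp: ennreal_neg)
  have rep: "ennreal (max 0 (x - y)) = (\<integral>\<^sup>+t. 1 * indicator {t. y \<le> t \<and> t < x} t \<partial>lborel)" for x y :: real
    using rep1[of x y] by simp
  have c1: "(\<integral>\<^sup>+t. 1 * ennreal (G t - F t) \<partial>lborel) \<le> (\<integral>\<^sup>+\<omega>. (\<integral>\<^sup>+t. 1 * indicator {t. Y \<omega> \<le> t \<and> t < X \<omega>} t \<partial>lborel) \<partial>P)"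
    unfolding Fe Ge by (rule coupling_side[OF P _ _ lborel.sigma_finite_measure_axioms]) measurable
  have c2: "(\<integral>\<^sup>+t. 1 * ennreal (F t - G t) \<partial>lborel) \<le> (\<integral>\<^sup>+\<omega>. (\<integral>\<^sup>+t. 1 * indicator {t. X \<omega> \<le> t \<and> t < Y \<omega>} t \<partial>lborel) \<partial>P)"
    unfolding Fe Ge by (rule coupling_side[OF P _ _ lborel.sigma_finite_measure_axioms]) measurable
  have "(\<integral>\<^sup>+t. ennreal \<bar>F t - G t\<bar> * indicator {0..} t \<partial>lborel) \<le> (\<integral>\<^sup>+t. ennreal \<bar>F t - G t\<bar> \<partial>lborel)"
    by (intro nn_integral_mono) (auto split: split_indicator)
  also have "\<dots> = (\<integral>\<^sup>+t. 1 * ennreal (G t - F t) + 1 * ennreal (F t - G t) \<partial>lborel)"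
    by (simp only: split2)
  also have "\<dots> = (\<integral>\<^sup>+t. 1 * ennreal (G t - F t) \<partial>lborel) + (\<integral>\<^sup>+t. 1 * ennreal (F t - G t) \<partial>lborel)"
    by (rule nn_integral_add) measurable
  also have "\<dots> \<le> (\<integral>\<^sup>+\<omega>. (\<integral>\<^sup>+t. 1 * indicator {t. Y \<omega> \<le> t \<and> t < X \<omega>} t \<partial>lborel) \<partial>P)
      + (\<integral>\<^sup>+\<omega>. (\<integral>\<^sup>+t. 1 * indicator {t. X \<omega> \<le> t \<and> t < Y \<omega>} t \<partial>lborel) \<partial>P)"
    by (rule add_mono[OF c1 c2])
  also have "\<dots> = (\<integral>\<^sup>+\<omega>. ennreal (max 0 (X \<omega> - Y \<omega>)) \<partial>P) + (\<integral>\<^sup>+\<omega>. ennreal (max 0 (Y \<omega> - X \<omega>)) \<partial>P)"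
    by (simp only: rep)
  also have "\<dots> = (\<integral>\<^sup>+\<omega>. ennreal (max 0 (X \<omega> - Y \<omega>)) + ennreal (max 0 (Y \<omega> - X \<omega>)) \<partial>P)"
    by (rule nn_integral_add[symmetric]) measurable
  also have "\<dots> = (\<integral>\<^sup>+\<omega>. ennreal \<bar>X \<omega> - Y \<omega>\<bar> \<partial>P)"
    by (simp only: split)
  finally show ?thesis .
qed



lemma mm_prob: "mm_space N \<Longrightarrow> prob_space N" by (simp add: mm_space_def)

lemma mm_sets: "mm_space N \<Longrightarrow> sets N = sets (restrict_space borel (space N))" by (simp add: mm_space_def)

lemma mm_bound:
  assumes "mm_space N" obtains D where "0 \<le> D" "\<And>x y. x \<in> space N \<Longrightarrow> y \<in> space N \<Longrightarrow> dist x y \<le> D"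
proof -
  have b: "bounded (space N)" using assms by (simp add: mm_space_def compact_imp_bounded)
  show ?thesis
    by (rule that[of "diameter (space N)"]) (auto intro: diameter_bounded_bound[OF b] simp: diameter_ge_0 b)
qed

lemma mm_borel_sets:
  assumes "mm_space N" "A \<in> sets borel" shows "A \<inter> space N \<in> sets N"
proof -
  have "space N \<inter> A \<in> sets (restrict_space borel (space N))"
    unfolding sets_restrict_space using assms(2) by blast
  then show ?thesis using mm_sets[OF assms(1)] by (simp add: Int_commute)
qed

lemma mm_meas_cont:
  fixes f :: "'a::metric_space \<Rightarrow> real"
  assumes "mm_space N" "continuous_on UNIV f" shows "f \<in> borel_measurable N"
proof -
  have "f \<in> borel_measurable (restrict_space borel (space N))"
    by (intro measurable_restrict_space1 borel_measurable_continuous_onI assms(2))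
  then show ?thesis using measurable_cong_sets[OF mm_sets[OF assms(1)] refl] by blast
qed

lemma ldd_sets: "mm_space N \<Longrightarrow> cball y t \<inter> space N \<in> sets N"
  by (rule mm_borel_sets) auto

lemma ldd_mono: assumes "mm_space N" "s \<le> t" shows "ldd N y s \<le> ldd N y t"
proof -
  interpret prob_space N using mm_prob[OF assms(1)] .
  show ?thesis unfolding ldd_def
    by (rule finite_measure_mono) (use assms ldd_sets in auto)
qed

lemma ldd_neg: "t < 0 \<Longrightarrow> ldd N y t = 0" by (simp add: ldd_def)

lemma ldd_le1: "mm_space N \<Longrightarrow> ldd N y t \<le> 1"
  unfolding ldd_def using mm_prob prob_space.prob_le_1 by blast

lemma ldd_D:
  assumes "mm_space N" "y \<in> space N" "\<And>x y. x \<in> space N \<Longrightarrow> y \<in> space N \<Longrightarrow> dist x y \<le> D"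
  shows "ldd N y D = 1"
proof -
  interpret prob_space N using mm_prob[OF assms(1)] .
  have "cball y D \<inter> space N = space N" using assms(2,3) by auto
  then show ?thesis unfolding ldd_def by (simp add: prob_space)
qed

lemma ldd_rcont:
  assumes "mm_space N" "ldd N y r < u"
  shows "\<exists>e>0. ldd N y (r + e) < u"
proof -
  interpret prob_space N using mm_prob[OF assms(1)] .
  define A where "A n = cball y (r + 1 / (real n + 1)) \<inter> space N" for n :: nat
  have dec: "decseq A"
    unfolding A_def decseq_def
  proof (intro allI impI subsetI)
    fix m n :: nat and x assume mn: "m \<le> n" and x: "x \<in> cball y (r + 1 / (real n + 1)) \<inter> space N"
    have "1 / (real n + 1) \<le> 1 / (real m + 1)" using mn by (intro divide_left_mono) auto
    then show "x \<in> cball y (r + 1 / (real m + 1)) \<inter> space N" using x by auto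
  qed
  have "(\<Inter>n. A n) = cball y r \<inter> space N"
  proof (intro equalityI subsetI)
    fix x assume x: "x \<in> (\<Inter>n. A n)"
    have xb: "dist y x \<le> r + 1 / (real n + 1)" for n using x by (auto simp: A_def)
    have "dist y x \<le> r"
    proof (rule ccontr)
      assume "\<not> dist y x \<le> r"
      then have "0 < dist y x - r" by simp
      from ex_inverse_of_nat_less[OF this] obtain n :: nat where n: "0 < n" "inverse (real n) < dist y x - r" by blast
      have "1 / (real n + 1) \<le> inverse (real n)" using n(1) by (simp add: divide_simps)
      with n(2) xb[of n] show False by linarith
    qed
    then show "x \<in> cball y r \<inter> space N" using x by (auto simp: A_def)
  qed (auto simp: A_def intro: order_trans)
  moreover have "(\<lambda>n. measure N (A n)) \<longlonglongrightarrow> measure N (\<Inter>n. A n)"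
    by (rule finite_Lim_measure_decseq) (use ldd_sets[OF assms(1)] dec in \<open>auto simp: A_def[abs_def]\<close>)
  ultimately have "(\<lambda>n. ldd N y (r + 1 / (real n + 1))) \<longlonglongrightarrow> ldd N y r"
    by (simp add: ldd_def A_def)
  from order_tendstoD(2)[OF this assms(2)] obtain n where "ldd N y (r + 1 / (real n + 1)) < u"
    by (auto simp: eventually_sequentially)
  then show ?thesis by (intro exI[of _ "1 / (real n + 1)"]) auto
qed




lemma ldd_inv_props:
  assumes N: "mm_space N" and y: "y \<in> space N" and u: "0 \<le> u" "u < 1"
  shows "\<And>r. ldd_inv N y u \<le> r \<Longrightarrow> u \<le> ldd N y r"
    and "\<And>t. t < ldd_inv N y u \<Longrightarrow> ldd N y t \<le> u"
proof -
  obtain D where D: "0 \<le> D" "\<And>x y. x \<in> space N \<Longrightarrow> y \<in> space N \<Longrightarrow> dist x y \<le> D"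
    using mm_bound[OF N] by blast
  define S where "S = {r. 0 \<le> r \<and> ldd N y r > u}"
  have DS: "D \<in> S" using ldd_D[OF N y D(2)] D(1) u by (auto simp: S_def)
  have ne: "S \<noteq> {}" using DS by auto
  have bb: "bdd_below S" by (auto simp: S_def bdd_below_def)
  have inv: "ldd_inv N y u = Inf S" by (simp add: ldd_inv_def S_def)
  show "u \<le> ldd N y r" if r: "ldd_inv N y u \<le> r" for r
  proof (rule ccontr)
    assume "\<not> u \<le> ldd N y r"
    then have "ldd N y r < u" by simp
    then obtain e where e: "e > 0" "ldd N y (r + e) < u" using ldd_rcont[OF N] by blast
    have "r + e \<le> Inf S"
    proof (rule cInf_greatest[OF ne])
      fix s assume s: "s \<in> S"
      show "r + e \<le> s"
      proof (rule ccontr)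
        assume "\<not> r + e \<le> s"
        then have "ldd N y s \<le> ldd N y (r + e)" by (intro ldd_mono[OF N]) auto
        with s e show False by (auto simp: S_def)
      qed
    qed
    with r e inv show False by simp
  qed
  show "ldd N y t \<le> u" if t: "t < ldd_inv N y u" for t
  proof (rule ccontr)
    assume c: "\<not> ldd N y t \<le> u"
    have "0 \<le> t"
    proof (rule ccontr)
      assume "\<not> 0 \<le> t"
      then have "ldd N y t = 0" by (intro ldd_neg) simp
      with c u show False by simp
    qed
    with c have "t \<in> S" by (auto simp: S_def)
    then have "Inf S \<le> t" by (intro cInf_lower bb)
    with t inv show False by simp
  qed
qed



lemma ldd_inv_meas:
  assumes N: "mm_space N" and y: "y \<in> space N"
  shows "ldd_inv N y \<in> borel_measurable borel"
proof (rule borel_measurable_piecewise_mono[of "{{..<1}, {1..}}"])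
  show "countable {{..<1::real}, {1..}}" by simp
  show "\<And>c. c \<in> {{..<1::real}, {1..}} \<Longrightarrow> c \<in> sets borel" by auto
  show "\<Union> {{..<1::real}, {1..}} = UNIV" by auto
  obtain D where D: "0 \<le> D" "\<And>x y. x \<in> space N \<Longrightarrow> y \<in> space N \<Longrightarrow> dist x y \<le> D"
    using mm_bound[OF N] by blast
  have m1: "mono_on {..<1} (ldd_inv N y)"
  proof (rule mono_onI)
    fix u v :: real assume uv: "u \<in> {..<1}" "v \<in> {..<1}" "u \<le> v"
    have "D \<in> {r. 0 \<le> r \<and> ldd N y r > v}" using ldd_D[OF N y D(2)] D(1) uv by auto
    then show "ldd_inv N y u \<le> ldd_inv N y v" unfolding ldd_inv_def
      by (intro cInf_superset_mono) (use uv in \<open>auto simp: bdd_below_def\<close>)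
  qed
  have m2: "mono_on {1..} (ldd_inv N y)"
  proof (rule mono_onI)
    fix u v :: real assume uv: "u \<in> {1..}" "v \<in> {1..}" "u \<le> v"
    have e: "{r. 0 \<le> r \<and> ldd N y r > w} = {}" if "1 \<le> w" for w
    proof -
      have "\<not> w < ldd N y r" for r using ldd_le1[OF N, of y r] that by linarith
      then show ?thesis by blast
    qed
    have "u \<ge> 1" "v \<ge> 1" using uv by auto
    then show "ldd_inv N y u \<le> ldd_inv N y v" unfolding ldd_inv_def by (simp only: e)
  qed
  show "\<And>c. c \<in> {{..<1}, {1..}} \<Longrightarrow> mono_on c (ldd_inv N y)" using m1 m2 by auto
qed



lemma dist_meas:
  assumes N: "mm_space N"
  shows "(\<lambda>z. dist (fst z) (snd z)) \<in> borel_measurable (N \<Otimes>\<^sub>M N)"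
proof -
  have cpt: "compact (space N)" using N by (simp add: mm_space_def)
  have nonempty: "space N \<noteq> {}" using mm_prob[OF N] prob_space.not_empty by blast
  have ex: "\<forall>n::nat. \<exists>T. finite T \<and> T \<subseteq> space N \<and> T \<noteq> {} \<and> space N \<subseteq> (\<Union>t\<in>T. ball t (1 / (real n + 1)))"
  proof
    fix n :: nat
    have cov: "space N \<subseteq> (\<Union>t\<in>space N. ball t (1 / (real n + 1)))"
    proof
      fix x assume x: "x \<in> space N"
      have "x \<in> ball x (1 / (real n + 1))" by simp
      then show "x \<in> (\<Union>t\<in>space N. ball t (1 / (real n + 1)))" using x by blast
    qed
    have opn: "\<And>t. t \<in> space N \<Longrightarrow> open (ball t (1 / (real n + 1)))" by simp
    obtain T where T: "T \<subseteq> space N" "finite T" "space N \<subseteq> (\<Union>t\<in>T. ball t (1 / (real n + 1)))"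
      using compactE_image[OF cpt opn cov] by blast
    then have "T \<noteq> {}" using nonempty by auto
    with T show "\<exists>T. finite T \<and> T \<subseteq> space N \<and> T \<noteq> {} \<and> space N \<subseteq> (\<Union>t\<in>T. ball t (1 / (real n + 1)))" by blast
  qed
  from choice[OF ex] obtain T where T0: "\<forall>n. finite (T n) \<and> T n \<subseteq> space N \<and> T n \<noteq> {} \<and>
      space N \<subseteq> (\<Union>t\<in>T n. ball t (1 / (real n + 1)))" by blast
  then have T: "\<And>n. finite (T n)" "\<And>n. T n \<subseteq> space N" "\<And>n. T n \<noteq> {}"
      "\<And>n. space N \<subseteq> (\<Union>t\<in>T n. ball t (1 / (real n + 1)))" by auto
  define h where "h n z = Min ((\<lambda>t. dist (fst z) t + dist t (snd z)) ` T n)" for n z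
  have dm: "(\<lambda>x. dist x t) \<in> borel_measurable N" for t
    by (rule mm_meas_cont[OF N]) (intro continuous_intros)
  have dm2: "(\<lambda>x. dist t x) \<in> borel_measurable N" for t
    by (rule mm_meas_cont[OF N]) (intro continuous_intros)
  have hm: "h n \<in> borel_measurable (N \<Otimes>\<^sub>M N)" for n
    unfolding h_def
  proof (rule borel_measurable_Min[OF T(1)])
    fix t assume "t \<in> T n"
    have "(\<lambda>z. dist (fst z) t) \<in> borel_measurable (N \<Otimes>\<^sub>M N)"
      using measurable_comp[OF measurable_fst dm[of t]] by (simp add: o_def)
    moreover have "(\<lambda>z. dist t (snd z)) \<in> borel_measurable (N \<Otimes>\<^sub>M N)"
      using measurable_comp[OF measurable_snd dm2[of t]] by (simp add: o_def)
    ultimately show "(\<lambda>z. dist (fst z) t + dist t (snd z)) \<in> borel_measurable (N \<Otimes>\<^sub>M N)"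
      by (rule borel_measurable_add)
  qed
  show ?thesis
  proof (rule borel_measurable_LIMSEQ_real[OF _ hm])
    fix z assume z: "z \<in> space (N \<Otimes>\<^sub>M N)"
    then have z2: "snd z \<in> space N" by (auto simp: space_pair_measure)
    have lo: "dist (fst z) (snd z) \<le> h n z" for n
      unfolding h_def using T(1,3) by (simp add: Min_ge_iff dist_triangle)
    have hi: "h n z \<le> dist (fst z) (snd z) + 2 / (real n + 1)" for n
    proof -
      obtain t where t0: "t \<in> T n" "snd z \<in> ball t (1 / (real n + 1))"
        using T(4)[of n] z2 by blast
      then have t: "t \<in> T n" "dist t (snd z) < 1 / (real n + 1)" by auto
      have "h n z \<le> dist (fst z) t + dist t (snd z)"
        unfolding h_def using T(1) t(1) by (intro Min_le) auto
      also have "\<dots> \<le> dist (fst z) (snd z) + 2 * dist t (snd z)"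
        using dist_triangle[of "fst z" t "snd z"] dist_triangle[of "fst z" "snd z" t] by (simp add: dist_commute)
      also have "\<dots> \<le> dist (fst z) (snd z) + 2 / (real n + 1)" using t(2) by simp
      finally show ?thesis .
    qed
    have l0: "(\<lambda>n. 2 / (real n + 1)) \<longlonglongrightarrow> (0::real)"
      using LIMSEQ_Suc[OF lim_const_over_n[of 2]] by (simp add: add.commute)
    have lim: "(\<lambda>n. dist (fst z) (snd z) + 2 / (real n + 1)) \<longlonglongrightarrow> dist (fst z) (snd z) + 0"
      by (intro tendsto_add tendsto_const l0)
    show "(\<lambda>n. h n z) \<longlonglongrightarrow> dist (fst z) (snd z)"
    proof (rule tendsto_sandwich[of "\<lambda>_. dist (fst z) (snd z)" _ _ "\<lambda>n. dist (fst z) (snd z) + 2 / (real n + 1)"])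
      show "\<forall>\<^sub>F n in sequentially. dist (fst z) (snd z) \<le> h n z" using lo by (simp add: always_eventually)
      show "\<forall>\<^sub>F n in sequentially. h n z \<le> dist (fst z) (snd z) + 2 / (real n + 1)" using hi by (simp add: always_eventually)
      show "(\<lambda>n. dist (fst z) (snd z)) \<longlonglongrightarrow> dist (fst z) (snd z)" by simp
      show "(\<lambda>n. dist (fst z) (snd z) + 2 / (real n + 1)) \<longlonglongrightarrow> dist (fst z) (snd z)" using lim by simp
    qed
  qed
qed




lemma set_int_le:
  fixes f :: "real \<Rightarrow> real"
  assumes nn: "\<And>x. x \<in> A \<Longrightarrow> 0 \<le> f x"
    and le: "(\<integral>\<^sup>+x. ennreal (f x) * indicator A x \<partial>lborel) \<le> ennreal c" and c: "0 \<le> c"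
  shows "(\<integral>x\<in>A. f x \<partial>lborel) \<le> c"
proof (cases "integrable lborel (\<lambda>x. indicator A x *\<^sub>R f x)")
  case True
  have "ennreal (\<integral>x. indicator A x *\<^sub>R f x \<partial>lborel) = (\<integral>\<^sup>+x. ennreal (indicator A x *\<^sub>R f x) \<partial>lborel)"
    by (rule nn_integral_eq_integral[symmetric, OF True]) (use nn in \<open>auto split: split_indicator\<close>)
  also have "\<dots> = (\<integral>\<^sup>+x. ennreal (f x) * indicator A x \<partial>lborel)"
    by (intro nn_integral_cong) (auto split: split_indicator)
  finally have "ennreal (\<integral>x. indicator A x *\<^sub>R f x \<partial>lborel) \<le> ennreal c" using le by simp
  then show ?thesis unfolding set_lebesgue_integral_def using c by (simp add: ennreal_le_iff)
next
  case False
  then show ?thesis unfolding set_lebesgue_integral_def using c by (simp add: not_integrable_integral_eq)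
qed

lemma set_int_nonneg:
  fixes f :: "real \<Rightarrow> real"
  assumes nn: "\<And>x. x \<in> A \<Longrightarrow> 0 \<le> f x"
  shows "0 \<le> (\<integral>x\<in>A. f x \<partial>lborel)"
  unfolding set_lebesgue_integral_def
  by (rule Bochner_Integration.integral_nonneg) (use nn in \<open>auto split: split_indicator\<close>)

lemma young_step:
  fixes q a t :: real
  assumes q: "0 < q" "q \<le> 1" and a: "0 < a" and t: "0 \<le> t"
  shows "t powr q \<le> (q * t + (1 - q) * a) / a powr (1 - q)"
proof (cases "t = 0")
  case True then show ?thesis using q a by simp
next
  case False
  with t have "0 < t" by simp
  from Youngs_inequality_0[of q "1 - q" t a] q a this
  have "t powr q * a powr (1 - q) \<le> q * t + (1 - q) * a" by simp
  then show ?thesis using a by (simp add: pos_le_divide_eq)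
qed

lemma jensen_step:
  fixes J A :: "'a \<Rightarrow> real"
  assumes P: "prob_space M" and p: "1 \<le> p" and J: "integrable M J"
    and Jnn: "\<And>x. x \<in> space M \<Longrightarrow> 0 \<le> J x" and JB: "\<And>x. x \<in> space M \<Longrightarrow> J x \<le> B"
    and AJ: "\<And>x. x \<in> space M \<Longrightarrow> A x \<le> J x powr (1 / p)"
  shows "(\<integral>x. A x \<partial>M) \<le> (\<integral>x. J x \<partial>M) powr (1 / p)"
proof -
  interpret prob_space M by fact
  define q where "q = 1 / p"
  have q: "0 < q" "q \<le> 1" using p by (auto simp: q_def)
  have Jm[measurable]: "J \<in> borel_measurable M" using J by (rule borel_measurable_integrable)
  have intq: "integrable M (\<lambda>x. J x powr q)"
  proof (rule integrable_const_bound[where B="B powr q"])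
    show "AE x in M. norm (J x powr q) \<le> B powr q"
      using Jnn JB q by (intro AE_I2) (auto intro!: powr_mono2)
  qed measurable
  have s1: "(\<integral>x. A x \<partial>M) \<le> (\<integral>x. J x powr q \<partial>M)"
  proof (cases "integrable M A")
    case True then show ?thesis using AJ intq by (intro integral_mono) (auto simp: q_def)
  next
    case False then show ?thesis by (simp add: not_integrable_integral_eq)
  qed
  define a where "a = (\<integral>x. J x \<partial>M)"
  have a0: "0 \<le> a" unfolding a_def using Jnn by (intro integral_nonneg_AE AE_I2) auto
  have s2: "(\<integral>x. J x powr q \<partial>M) \<le> a powr q"
  proof (cases "a = 0")
    case True
    have "AE x in M. J x = 0"
      using integral_nonneg_eq_0_iff_AE[OF J] Jnn True unfolding a_def by (auto intro: AE_I2)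
    then have "(\<integral>x. J x powr q \<partial>M) = (\<integral>x. 0 \<partial>M)"
      by (intro integral_cong_AE) (auto elim: AE_mp)
    then show ?thesis using True by simp
  next
    case False
    with a0 have apos: "0 < a" by simp
    have "(\<integral>x. J x powr q \<partial>M) \<le> (\<integral>x. (q * J x + (1 - q) * a) / a powr (1 - q) \<partial>M)"
      using intq J Jnn q apos
      by (intro integral_mono) (auto intro!: young_step)
    also have "\<dots> = (q * a + (1 - q) * a) / a powr (1 - q)"
      using J by (simp add: a_def prob_space)
    also have "\<dots> = a powr q"
      using apos by (simp add: powr_diff algebra_simps)
    finally show ?thesis .
  qed
  show ?thesis using s1 s2 by (simp add: a_def q_def)
qed




lemma tm_meas: "\<phi> \<in> transport_maps M N \<Longrightarrow> \<phi> \<in> M \<rightarrow>\<^sub>M N" by (simp add: transport_maps_def)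
lemma tm_distr: "\<phi> \<in> transport_maps M N \<Longrightarrow> distr M N \<phi> = N" by (simp add: transport_maps_def)

lemma cdf_X:
  "ldd M x t = measure M {\<omega>\<in>space M. dist x \<omega> \<le> t}"
proof -
  have "cball x t \<inter> space M = {\<omega>\<in>space M. dist x \<omega> \<le> t}" by auto
  then show ?thesis by (simp add: ldd_def)
qed

lemma cdf_Y:
  assumes N: "mm_space N" and \<phi>: "\<phi> \<in> transport_maps M N"
  shows "ldd N y t = measure M {\<omega>\<in>space M. dist y (\<phi> \<omega>) \<le> t}"
proof -
  have "ldd N y t = measure (distr M N \<phi>) (cball y t \<inter> space N)"
    by (simp add: ldd_def tm_distr[OF \<phi>])
  also have "\<dots> = measure M (\<phi> -` (cball y t \<inter> space N) \<inter> space M)"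
    by (rule measure_distr[OF tm_meas[OF \<phi>] ldd_sets[OF N]])
  also have "\<phi> -` (cball y t \<inter> space N) \<inter> space M = {\<omega>\<in>space M. dist y (\<phi> \<omega>) \<le> t}"
    using measurable_space[OF tm_meas[OF \<phi>]] by auto
  finally show ?thesis .
qed

lemma Y_meas:
  assumes N: "mm_space N" and \<phi>: "\<phi> \<in> transport_maps M N"
  shows "(\<lambda>\<omega>. dist y (\<phi> \<omega>)) \<in> borel_measurable M"
proof -
  have "(\<lambda>z. dist y z) \<in> borel_measurable N" by (rule mm_meas_cont[OF N]) (intro continuous_intros)
  from measurable_comp[OF tm_meas[OF \<phi>] this] show ?thesis by (simp add: o_def)
qed

lemma X_meas:
  assumes M: "mm_space M"
  shows "(\<lambda>\<omega>. dist x \<omega>) \<in> borel_measurable M"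
  by (rule mm_meas_cont[OF M]) (intro continuous_intros)

lemma per_x_int:
  fixes M :: "'a::metric_space measure" and N :: "'b::metric_space measure"
  assumes M: "mm_space M" and N: "mm_space N" and \<phi>: "\<phi> \<in> transport_maps M N" and x: "x \<in> space M" and p: "0 \<le> p"
  shows "integrable M (\<lambda>x'. \<bar>dist x x' - dist (\<phi> x) (\<phi> x')\<bar> powr p)"
    and "ennreal (\<integral>x'. \<bar>dist x x' - dist (\<phi> x) (\<phi> x')\<bar> powr p \<partial>M)
        = (\<integral>\<^sup>+x'. ennreal (\<bar>dist x x' - dist (\<phi> x) (\<phi> x')\<bar> powr p) \<partial>M)"
proof -
  interpret prob_space M using mm_prob[OF M] .
  obtain DM where DM: "0 \<le> DM" "\<And>x y. x \<in> space M \<Longrightarrow> y \<in> space M \<Longrightarrow> dist x y \<le> DM"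
    using mm_bound[OF M] by blast
  obtain DN where DN: "0 \<le> DN" "\<And>x y. x \<in> space N \<Longrightarrow> y \<in> space N \<Longrightarrow> dist x y \<le> DN"
    using mm_bound[OF N] by blast
  have [measurable]: "(\<lambda>\<omega>. dist x \<omega>) \<in> borel_measurable M" by (rule X_meas[OF M])
  have [measurable]: "(\<lambda>\<omega>. dist (\<phi> x) (\<phi> \<omega>)) \<in> borel_measurable M" by (rule Y_meas[OF N \<phi>])
  have \<phi>x: "\<phi> x \<in> space N" using measurable_space[OF tm_meas[OF \<phi>] x] .
  show int: "integrable M (\<lambda>x'. \<bar>dist x x' - dist (\<phi> x) (\<phi> x')\<bar> powr p)"
  proof (rule integrable_const_bound[where B="(DM + DN) powr p"])
    show "AE x' in M. norm (\<bar>dist x x' - dist (\<phi> x) (\<phi> x')\<bar> powr p) \<le> (DM + DN) powr p"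
    proof (rule AE_I2)
      fix x' assume x': "x' \<in> space M"
      have \<phi>x': "\<phi> x' \<in> space N" using measurable_space[OF tm_meas[OF \<phi>] x'] .
      have "\<bar>dist x x' - dist (\<phi> x) (\<phi> x')\<bar> \<le> DM + DN"
        using DM(2)[OF x x'] DN(2)[OF \<phi>x \<phi>x'] zero_le_dist[of x x'] zero_le_dist[of "\<phi> x" "\<phi> x'"] unfolding abs_le_iff by linarith
      then show "norm (\<bar>dist x x' - dist (\<phi> x) (\<phi> x')\<bar> powr p) \<le> (DM + DN) powr p"
        using p by (auto intro!: powr_mono2)
    qed
  qed measurable
  show "ennreal (\<integral>x'. \<bar>dist x x' - dist (\<phi> x) (\<phi> x')\<bar> powr p \<partial>M)
        = (\<integral>\<^sup>+x'. ennreal (\<bar>dist x x' - dist (\<phi> x) (\<phi> x')\<bar> powr p) \<partial>M)"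
    by (rule nn_integral_eq_integral[symmetric, OF int]) simp
qed




lemma per_x_quant:
  fixes M :: "'a::metric_space measure" and N :: "'b::metric_space measure"
  assumes M: "mm_space M" and N: "mm_space N" and \<phi>: "\<phi> \<in> transport_maps M N" and x: "x \<in> space M"
    and p: "1 \<le> p"
  shows "(\<integral>u\<in>{0..1}. \<bar>ldd_inv M x u - ldd_inv N (\<phi> x) u\<bar> powr p \<partial>lborel)
     \<le> (\<integral>x'. \<bar>dist x x' - dist (\<phi> x) (\<phi> x')\<bar> powr p \<partial>M)"
proof (rule set_int_le)
  have \<phi>x: "\<phi> x \<in> space N" using measurable_space[OF tm_meas[OF \<phi>] x] .
  note qM = ldd_inv_props[OF M x] and qN = ldd_inv_props[OF N \<phi>x]
  have "(\<integral>\<^sup>+u. ennreal (\<bar>ldd_inv M x u - ldd_inv N (\<phi> x) u\<bar> powr p) * indicator {0..1} u \<partial>lborel)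
     \<le> (\<integral>\<^sup>+x'. ennreal (\<bar>dist x x' - dist (\<phi> x) (\<phi> x')\<bar> powr p) \<partial>M)"
    by (rule quantile_vs_coupling[OF p mm_prob[OF M] X_meas[OF M] Y_meas[OF N \<phi>]
          ldd_inv_meas[OF M x] ldd_inv_meas[OF N \<phi>x] cdf_X cdf_Y[OF N \<phi>]])
       (use qM qN in auto)
  also have "\<dots> = ennreal (\<integral>x'. \<bar>dist x x' - dist (\<phi> x) (\<phi> x')\<bar> powr p \<partial>M)"
    using p by (intro per_x_int(2)[OF M N \<phi> x, symmetric]) simp
  finally show "(\<integral>\<^sup>+u. ennreal (\<bar>ldd_inv M x u - ldd_inv N (\<phi> x) u\<bar> powr p) * indicator {0..1} u \<partial>lborel)
     \<le> ennreal (\<integral>x'. \<bar>dist x x' - dist (\<phi> x) (\<phi> x')\<bar> powr p \<partial>M)" .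
  show "0 \<le> (\<integral>x'. \<bar>dist x x' - dist (\<phi> x) (\<phi> x')\<bar> powr p \<partial>M)"
    by (rule Bochner_Integration.integral_nonneg) simp
qed simp

lemma per_x_cost:
  fixes M :: "'a::metric_space measure" and N :: "'b::metric_space measure"
  assumes M: "mm_space M" and N: "mm_space N" and \<phi>: "\<phi> \<in> transport_maps M N" and x: "x \<in> space M"
  shows "cost M N x (\<phi> x) \<le> (\<integral>x'. \<bar>dist x x' - dist (\<phi> x) (\<phi> x')\<bar> powr 1 \<partial>M)"
  unfolding cost_def
proof (rule set_int_le)
  have "(\<integral>\<^sup>+t. ennreal \<bar>ldd M x t - ldd N (\<phi> x) t\<bar> * indicator {0..} t \<partial>lborel)
     \<le> (\<integral>\<^sup>+x'. ennreal \<bar>dist x x' - dist (\<phi> x) (\<phi> x')\<bar> \<partial>M)"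
    by (rule cost_vs_coupling[OF mm_prob[OF M] X_meas[OF M] Y_meas[OF N \<phi>] cdf_X cdf_Y[OF N \<phi>]])
  also have "\<dots> = ennreal (\<integral>x'. \<bar>dist x x' - dist (\<phi> x) (\<phi> x')\<bar> powr 1 \<partial>M)"
    using per_x_int(2)[OF M N \<phi> x, of 1] by simp
  finally show "(\<integral>\<^sup>+t. ennreal \<bar>ldd M x t - ldd N (\<phi> x) t\<bar> * indicator {0..} t \<partial>lborel)
     \<le> ennreal (\<integral>x'. \<bar>dist x x' - dist (\<phi> x) (\<phi> x')\<bar> powr 1 \<partial>M)" .
  show "0 \<le> (\<integral>x'. \<bar>dist x x' - dist (\<phi> x) (\<phi> x')\<bar> powr 1 \<partial>M)"
    by (rule Bochner_Integration.integral_nonneg) simp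
qed simp




lemma per_phi:
  fixes M :: "'a::metric_space measure" and N :: "'b::metric_space measure"
  assumes M: "mm_space M" and N: "mm_space N" and p: "1 \<le> p" and \<phi>: "\<phi> \<in> transport_maps M N"
    and A: "\<And>x. x \<in> space M \<Longrightarrow> A x \<le> (\<integral>x'. \<bar>dist x x' - dist (\<phi> x) (\<phi> x')\<bar> powr p \<partial>M) powr (1 / p)"
  shows "(\<integral>x. A x \<partial>M) \<le> (integral\<^sup>L (M \<Otimes>\<^sub>M M) (\<lambda>(x, x'). \<bar>dist x x' - dist (\<phi> x) (\<phi> x')\<bar> powr p)) powr (1 / p)"
proof -
  interpret MP: prob_space M using mm_prob[OF M] .
  interpret PP: pair_prob_space M M ..
  have PPp: "prob_space (M \<Otimes>\<^sub>M M)" by intro_locales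
  obtain DM where DM: "0 \<le> DM" "\<And>x y. x \<in> space M \<Longrightarrow> y \<in> space M \<Longrightarrow> dist x y \<le> DM"
    using mm_bound[OF M] by blast
  obtain DN where DN: "0 \<le> DN" "\<And>x y. x \<in> space N \<Longrightarrow> y \<in> space N \<Longrightarrow> dist x y \<le> DN"
    using mm_bound[OF N] by blast
  have \<phi>m[measurable]: "\<phi> \<in> M \<rightarrow>\<^sub>M N" by (rule tm_meas[OF \<phi>])
  define f where "f = (\<lambda>(x, x'). \<bar>dist x x' - dist (\<phi> x) (\<phi> x')\<bar> powr p)"
  have g1[measurable]: "(\<lambda>z. dist (fst z) (snd z)) \<in> borel_measurable (M \<Otimes>\<^sub>M M)" by (rule dist_meas[OF M])
  have "(\<lambda>z. (\<phi> (fst z), \<phi> (snd z))) \<in> M \<Otimes>\<^sub>M M \<rightarrow>\<^sub>M N \<Otimes>\<^sub>M N" by measurable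
  from measurable_comp[OF this dist_meas[OF N]]
  have g2[measurable]: "(\<lambda>z. dist (\<phi> (fst z)) (\<phi> (snd z))) \<in> borel_measurable (M \<Otimes>\<^sub>M M)" by (simp add: o_def)
  have fe: "f = (\<lambda>z. \<bar>dist (fst z) (snd z) - dist (\<phi> (fst z)) (\<phi> (snd z))\<bar> powr p)"
    by (simp add: f_def case_prod_beta')
  have fm[measurable]: "f \<in> borel_measurable (M \<Otimes>\<^sub>M M)" unfolding fe by measurable
  define B where "B = (DM + DN) powr p"
  have fB: "f z \<le> B" "0 \<le> f z" if z: "z \<in> space (M \<Otimes>\<^sub>M M)" for z
  proof -
    obtain x x' where xx: "z = (x, x')" "x \<in> space M" "x' \<in> space M" using z by (auto simp: space_pair_measure)
    have \<phi>x: "\<phi> x \<in> space N" "\<phi> x' \<in> space N" using measurable_space[OF \<phi>m] xx by auto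
    have "\<bar>dist x x' - dist (\<phi> x) (\<phi> x')\<bar> \<le> DM + DN"
      using DM(2)[OF xx(2,3)] DN(2)[OF \<phi>x] zero_le_dist[of x x'] zero_le_dist[of "\<phi> x" "\<phi> x'"]
      unfolding abs_le_iff by linarith
    then show "f z \<le> B" using p by (auto simp: f_def B_def xx intro!: powr_mono2)
    show "0 \<le> f z" by (simp add: f_def xx)
  qed
  have fint: "integrable (M \<Otimes>\<^sub>M M) f"
    by (rule finite_measure.integrable_const_bound[where B=B])
       (use PPp fB in \<open>auto simp: prob_space_def intro!: AE_I2\<close>)
  define J where "J x = (\<integral>x'. f (x, x') \<partial>M)" for x
  have Jint: "integrable M J" unfolding J_def by (rule PP.integrable_fst'[OF fint])
  have Jeq: "(\<integral>x. J x \<partial>M) = integral\<^sup>L (M \<Otimes>\<^sub>M M) f" unfolding J_def by (rule PP.integral_fst'[OF fint])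
  have Jf: "J x = (\<integral>x'. \<bar>dist x x' - dist (\<phi> x) (\<phi> x')\<bar> powr p \<partial>M)" for x by (simp add: J_def f_def)
  have Jnn: "0 \<le> J x" if "x \<in> space M" for x unfolding Jf by (rule Bochner_Integration.integral_nonneg) simp
  have JB: "J x \<le> B" if x: "x \<in> space M" for x
  proof -
    have "J x \<le> (\<integral>x'. B \<partial>M)" unfolding Jf
      using per_x_int(1)[OF M N \<phi> x, of p] fB x p
      by (intro integral_mono) (auto simp: f_def space_pair_measure)
    then show ?thesis by (simp add: MP.prob_space)
  qed
  have "(\<integral>x. A x \<partial>M) \<le> (\<integral>x. J x \<partial>M) powr (1 / p)"
    by (rule jensen_step[OF mm_prob[OF M] p Jint Jnn JB]) (use A Jf in auto)
  then show ?thesis using Jeq by (simp add: f_def)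
qed

theorem proposition4p2:
  fixes M :: "'a::metric_space measure" and N :: "'b::metric_space measure" and p :: real
  assumes "mm_space M" and "mm_space N" and "1 \<le> p"
  shows "dGM p M N \<ge> (INF \<phi>\<in>transport_maps M N.
            ereal (\<integral>x. (\<integral>u\<in>{0..1}. \<bar>ldd_inv M x u - ldd_inv N (\<phi> x) u\<bar> powr p \<partial>lborel) powr (1 / p) \<partial>M)) \<and>
         dGM 1 M N \<ge> (INF \<phi>\<in>transport_maps M N. ereal (\<integral>x. cost M N x (\<phi> x) \<partial>M))"
proof
  note M = assms(1) and N = assms(2) and p = assms(3)
  show "dGM p M N \<ge> (INF \<phi>\<in>transport_maps M N.
            ereal (\<integral>x. (\<integral>u\<in>{0..1}. \<bar>ldd_inv M x u - ldd_inv N (\<phi> x) u\<bar> powr p \<partial>lborel) powr (1 / p) \<partial>M))"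
    unfolding dGM_def
  proof (rule INF_mono)
    fix \<phi> assume \<phi>: "\<phi> \<in> transport_maps M N"
    have "(\<integral>x. (\<integral>u\<in>{0..1}. \<bar>ldd_inv M x u - ldd_inv N (\<phi> x) u\<bar> powr p \<partial>lborel) powr (1 / p) \<partial>M)
        \<le> (integral\<^sup>L (M \<Otimes>\<^sub>M M) (\<lambda>(x, x'). \<bar>dist x x' - dist (\<phi> x) (\<phi> x')\<bar> powr p)) powr (1 / p)"
    proof (rule per_phi[OF M N p \<phi>])
      fix x assume x: "x \<in> space M"
      show "(\<integral>u\<in>{0..1}. \<bar>ldd_inv M x u - ldd_inv N (\<phi> x) u\<bar> powr p \<partial>lborel) powr (1 / p)
          \<le> (\<integral>x'. \<bar>dist x x' - dist (\<phi> x) (\<phi> x')\<bar> powr p \<partial>M) powr (1 / p)"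
        using p by (intro powr_mono2 per_x_quant[OF M N \<phi> x p] set_int_nonneg) auto
    qed
    then show "\<exists>\<psi>\<in>transport_maps M N.
        ereal (\<integral>x. (\<integral>u\<in>{0..1}. \<bar>ldd_inv M x u - ldd_inv N (\<psi> x) u\<bar> powr p \<partial>lborel) powr (1 / p) \<partial>M)
        \<le> ereal ((integral\<^sup>L (M \<Otimes>\<^sub>M M) (\<lambda>(x, x'). \<bar>dist x x' - dist (\<phi> x) (\<phi> x')\<bar> powr p)) powr (1 / p))"
      using \<phi> by auto
  qed
  show "dGM 1 M N \<ge> (INF \<phi>\<in>transport_maps M N. ereal (\<integral>x. cost M N x (\<phi> x) \<partial>M))"
    unfolding dGM_def
  proof (rule INF_mono)
    fix \<phi> assume \<phi>: "\<phi> \<in> transport_maps M N"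
    have "(\<integral>x. cost M N x (\<phi> x) \<partial>M)
        \<le> (integral\<^sup>L (M \<Otimes>\<^sub>M M) (\<lambda>(x, x'). \<bar>dist x x' - dist (\<phi> x) (\<phi> x')\<bar> powr 1)) powr (1 / 1)"
    proof (rule per_phi[OF M N _ \<phi>])
      fix x assume x: "x \<in> space M"
      have "0 \<le> (\<integral>x'. \<bar>dist x x' - dist (\<phi> x) (\<phi> x')\<bar> powr 1 \<partial>M)"
        by (rule Bochner_Integration.integral_nonneg) simp
      then show "cost M N x (\<phi> x) \<le> (\<integral>x'. \<bar>dist x x' - dist (\<phi> x) (\<phi> x')\<bar> powr 1 \<partial>M) powr (1 / 1)"
        using per_x_cost[OF M N \<phi> x] by simp
    qed simp
    then show "\<exists>\<psi>\<in>transport_maps M N. ereal (\<integral>x. cost M N x (\<psi> x) \<partial>M)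
        \<le> ereal ((integral\<^sup>L (M \<Otimes>\<^sub>M M) (\<lambda>(x, x'). \<bar>dist x x' - dist (\<phi> x) (\<phi> x')\<bar> powr 1)) powr (1 / 1))"
      using \<phi> by auto
  qed
qed


end
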